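(* Let $n\ge 1$ and let $p\in\mathbb{P}^n$ be a word with no immediate repetitions. Then $p$ or $p^{+1}$ occurs as a subsequence of the first $n$ runs of the infinite zigzag word.
   Context: $\mathbb{P}$ denotes the positive integers; a word over $\mathbb{P}$ is a finite sequence of positive integers, $\mathbb{P}^n$ is the set of such words of length $n$, and $p(i)$ denotes the $i$th letter of $p$. The word $p^{+1}$ is defined by $p^{+1}(i)=p(i)+1$ for all $i$. A word $p$ has an immediate repetition if $p(i)=p(i+1)$ for some index $i$. The infinite zigzag word is the concatenation $R_1R_2R_3\cdots$ of runs, where each odd-indexed run $R_k$ is the ascending sequence $1,3,5,7,\dots$ of all odd positive integers and each even-indexed run $R_k$ is the descending sequence $\dots,8,6,4,2$ of all even positive integers. A word $p$ occurs as a subsequence of the first $m$ runs of the infinite zigzag word if $p$ can be written as a concatenation $p=q_1q_2\cdots q_m$ of (possibly empty) words such that for each odd $k$, $q_k$ is a strictly increasing sequence of odd integers, and for each even $k$, $q_k$ is a strictly decreasing sequence of even integers. *)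

theory Defs
  imports Main
begin

definition positive_word :: "nat list \<Rightarrow> bool" where
  "positive_word p \<longleftrightarrow> (\<forall>x\<in>set p. x \<ge> 1)"

definition shift_word :: "nat list \<Rightarrow> nat list" where
  "shift_word p = map (\<lambda>x. x + 1) p"

definition has_immediate_repetition :: "nat list \<Rightarrow> bool" where
  "has_immediate_repetition p \<longleftrightarrow> (\<exists>i. i + 1 < length p \<and> p ! i = p ! (i + 1))"

text \<open>Run k (1-indexed) of the zigzag word: odd k = ascending odd numbers,
  even k = descending even numbers. A piece q_k fits run k.\<close>
definition fits_run :: "nat \<Rightarrow> nat list \<Rightarrow> bool" where
  "fits_run k q \<longleftrightarrow>
     (if odd k then sorted_wrt (<) q \<and> (\<forall>x\<in>set q. odd x)
      else sorted_wrt (>) q \<and> (\<forall>x\<in>set q. even x \<and> x > 0))"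

definition occurs_in_zigzag_runs :: "nat \<Rightarrow> nat list \<Rightarrow> bool" where
  "occurs_in_zigzag_runs m p \<longleftrightarrow>
     (\<exists>qs :: nat list list. length qs = m \<and> concat qs = p \<and>
        (\<forall>k\<in>{1..m}. fits_run k (qs ! (k - 1))))"

end

theory Submission
  imports Defs
begin

definition stp :: "nat \<Rightarrow> nat \<Rightarrow> nat" where
  "stp y x = (if odd y \<noteq> odd x then 1 else if (odd y \<and> y < x) \<or> (even y \<and> x < y) then 0 else 2)"

fun cost :: "nat list \<Rightarrow> nat" where
  "cost [] = 0" | "cost [x] = 0" | "cost (y#x#r) = stp y x + cost (x#r)"

lemma norep_cons:
  assumes "\<not> has_immediate_repetition (x#y#r)"
  shows "x \<noteq> y \<and> \<not> has_immediate_repetition (y#r)"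
proof
  show "x \<noteq> y"
  proof
    assume "x = y"
    hence "0 + 1 < length (x#y#r) \<and> (x#y#r) ! 0 = (x#y#r) ! (0+1)" by simp
    thus False using assms unfolding has_immediate_repetition_def by blast
  qed
  show "\<not> has_immediate_repetition (y#r)"
  proof
    assume "has_immediate_repetition (y#r)"
    then obtain i where "i + 1 < length (y#r)" "(y#r) ! i = (y#r) ! (i+1)"
      unfolding has_immediate_repetition_def by blast
    hence "Suc i + 1 < length (x#y#r)" "(x#y#r) ! Suc i = (x#y#r) ! (Suc i+1)" by auto
    thus False using assms unfolding has_immediate_repetition_def by blast
  qed
qed

lemma key:
  "\<lbrakk> positive_word (x#r); \<not> has_immediate_repetition (x#r); odd s = odd x; cost (x#r) < m \<rbrakk> \<Longrightarrow>
   \<exists>t qs. length qs + 1 = m \<and> concat ((x#t)#qs) = x#r \<and> fits_run s (x#t) \<and>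
          (\<forall>j<length qs. fits_run (s+1+j) (qs!j))"
proof (induction r arbitrary: x s m)
  case Nil
  have "x > 0" using Nil.prems(1) by (auto simp: positive_word_def)
  hence "fits_run s [x]" using Nil.prems(3) by (auto simp: fits_run_def)
  moreover have "length (replicate (m-1) []) + 1 = m" using Nil.prems(4) by simp
  moreover have "\<forall>j<length (replicate (m-1) ([]::nat list)). fits_run (s+1+j) (replicate (m-1) [] ! j)"
    by (simp add: fits_run_def)
  moreover have "concat ([x] # replicate (m-1) []) = [x]" by simp
  ultimately show ?case by blast
next
  case (Cons y r')
  have xy: "x \<noteq> y" and nr: "\<not> has_immediate_repetition (y#r')"
    using norep_cons[OF Cons.prems(2)] by auto
  have py: "positive_word (y#r')" and x0: "x > 0" using Cons.prems(1) by (auto simp: positive_word_def)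
  have c: "stp x y + cost (y#r') < m" using Cons.prems(4) by simp
  consider (a) "odd x \<noteq> odd y" | (b) "odd x = odd y" "(odd x \<and> x < y) \<or> (even x \<and> y < x)"
    | (c) "odd x = odd y" "\<not> ((odd x \<and> x < y) \<or> (even x \<and> y < x))" by blast
  thus ?case
  proof cases
    case a
    hence "stp x y = 1" by (simp add: stp_def)
    hence "cost (y#r') < m - 1" using c by simp
    moreover have "odd (s+1) = odd y" using a Cons.prems(3) by auto
    ultimately obtain t qs where h: "length qs + 1 = m - 1" "concat ((y#t)#qs) = y#r'"
      "fits_run (s+1) (y#t)" "\<forall>j<length qs. fits_run (s+1+1+j) (qs!j)"
      using Cons.IH[OF py nr] by blast
    let ?qs = "(y#t)#qs"
    have "length ?qs + 1 = m" using h(1) by simp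
    moreover have "concat (([x])#?qs) = x#y#r'" using h(2) by simp
    moreover have "fits_run s [x]" using x0 Cons.prems(3) by (auto simp: fits_run_def)
    moreover have "\<forall>j<length ?qs. fits_run (s+1+j) (?qs!j)"
    proof (intro allI impI)
      fix j assume "j < length ?qs"
      show "fits_run (s+1+j) (?qs!j)"
      proof (cases j)
        case 0 thus ?thesis using h(3) by simp
      next
        case (Suc k) thus ?thesis using h(4) \<open>j < length ?qs\<close> by (simp add: add.commute add.left_commute)
      qed
    qed
    ultimately show ?thesis by blast
  next
    case b
    hence "stp x y = 0" by (simp add: stp_def)
    hence "cost (y#r') < m" using c by simp
    moreover have "odd s = odd y" using b Cons.prems(3) by auto
    ultimately obtain t qs where h: "length qs + 1 = m" "concat ((y#t)#qs) = y#r'"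
      "fits_run s (y#t)" "\<forall>j<length qs. fits_run (s+1+j) (qs!j)"
      using Cons.IH[OF py nr] by blast
    have "fits_run s (x#y#t)"
    proof (cases "odd s")
      case True
      hence "odd x" "x < y" using b Cons.prems(3) by auto
      moreover have "sorted_wrt (<) (y#t)" "\<forall>z\<in>set (y#t). odd z" using h(3) True by (simp_all add: fits_run_def)
      ultimately show ?thesis using True unfolding fits_run_def by (auto intro: less_trans)
    next
      case False
      hence "even x" "y < x" using b Cons.prems(3) by auto
      moreover have "sorted_wrt (>) (y#t)" "\<forall>z\<in>set (y#t). even z \<and> z > 0" using h(3) False by (simp_all add: fits_run_def)
      ultimately show ?thesis using False x0 unfolding fits_run_def by (auto intro: less_trans)
    qed
    moreover have "concat ((x#y#t)#qs) = x#y#r'" using h(2) by simp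
    ultimately show ?thesis using h(1) h(4) by blast
  next
    case c
    hence "stp x y = 2" by (simp add: stp_def)
    hence "cost (y#r') < m - 2" using \<open>stp x y + cost (y#r') < m\<close> by simp
    moreover have "odd (s+2) = odd y" using c Cons.prems(3) by auto
    ultimately obtain t qs where h: "length qs + 1 = m - 2" "concat ((y#t)#qs) = y#r'"
      "fits_run (s+2) (y#t)" "\<forall>j<length qs. fits_run (s+2+1+j) (qs!j)"
      using Cons.IH[OF py nr] by blast
    let ?qs = "[] # (y#t)#qs"
    have "length ?qs + 1 = m" using h(1) by simp
    moreover have "concat (([x])#?qs) = x#y#r'" using h(2) by simp
    moreover have "fits_run s [x]" using x0 Cons.prems(3) by (auto simp: fits_run_def)
    moreover have "\<forall>j<length ?qs. fits_run (s+1+j) (?qs!j)"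
    proof (intro allI impI)
      fix j assume j: "j < length ?qs"
      show "fits_run (s+1+j) (?qs!j)"
      proof (cases j)
        case 0 thus ?thesis by (simp add: fits_run_def)
      next
        case (Suc k)
        show ?thesis
        proof (cases k)
          case 0 thus ?thesis using h(3) Suc by (simp add: add.commute add.left_commute)
        next
          case (Suc l) thus ?thesis using h(4) j \<open>j = Suc k\<close> by (simp add: add.commute add.left_commute)
        qed
      qed
    qed
    ultimately show ?thesis by blast
  qed
qed

lemma cost_shift:
  "\<not> has_immediate_repetition p \<Longrightarrow> cost p + cost (map (\<lambda>x. x + 1) p) = 2 * (length p - 1)"
proof (induction p rule: cost.induct)
  case (3 y x r)
  have "y \<noteq> x" and nr: "\<not> has_immediate_repetition (x#r)" using norep_cons[OF "3.prems"] by auto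
  hence "stp y x + stp (y+1) (x+1) = 2" by (auto simp: stp_def)
  thus ?case using "3.IH"[OF nr] by simp
qed auto

lemma shift_props:
  "positive_word (shift_word p)" "\<not> has_immediate_repetition p \<Longrightarrow> \<not> has_immediate_repetition (shift_word p)"
  by (auto simp: positive_word_def shift_word_def has_immediate_repetition_def)

lemma main_odd:
  assumes "positive_word p" "\<not> has_immediate_repetition p" "p \<noteq> []" "odd (hd p)" "cost p < length p"
  shows "occurs_in_zigzag_runs (length p) p"
proof -
  obtain x r where p: "p = x#r" using assms(3) by (cases p) auto
  obtain t qs where h: "length qs + 1 = length p" "concat ((x#t)#qs) = p" "fits_run 1 (x#t)"
    "\<forall>j<length qs. fits_run (1+1+j) (qs!j)"
    using key[of x r 1 "length p"] assms p by auto
  let ?Q = "(x#t)#qs"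
  have "\<forall>k\<in>{1..length p}. fits_run k (?Q ! (k-1))"
  proof
    fix k assume k: "k \<in> {1..length p}"
    show "fits_run k (?Q ! (k-1))"
    proof (cases "k = 1")
      case True thus ?thesis using h(3) by simp
    next
      case False
      have "\<exists>l. k = Suc (Suc l)" using k False by (intro exI[of _ "k - 2"]) auto
      then obtain l where "k = Suc (Suc l)" by blast
      thus ?thesis using h(4) h(1) k by simp
    qed
  qed
  thus ?thesis unfolding occurs_in_zigzag_runs_def using h(1,2)
    by (intro exI[of _ ?Q]) simp
qed

lemma main_even:
  assumes "positive_word p" "\<not> has_immediate_repetition p" "p \<noteq> []" "even (hd p)" "cost p + 1 < length p"
  shows "occurs_in_zigzag_runs (length p) p"
proof -
  obtain x r where p: "p = x#r" using assms(3) by (cases p) auto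
  obtain t qs where h: "length qs + 1 = length p - 1" "concat ((x#t)#qs) = p" "fits_run 2 (x#t)"
    "\<forall>j<length qs. fits_run (2+1+j) (qs!j)"
    using key[of x r 2 "length p - 1"] assms p by auto
  let ?Q = "[] # (x#t)#qs"
  have "\<forall>k\<in>{1..length p}. fits_run k (?Q ! (k-1))"
  proof
    fix k assume k: "k \<in> {1..length p}"
    show "fits_run k (?Q ! (k-1))"
    proof (cases "k = 1")
      case True thus ?thesis by (simp add: fits_run_def)
    next
      case False
      show ?thesis
      proof (cases "k = 2")
        case True thus ?thesis using h(3) by simp
      next
        case False
        have "\<exists>l. k = Suc (Suc (Suc l))" using k \<open>k \<noteq> 1\<close> False
          by (intro exI[of _ "k - 3"]) auto
        then obtain l where kl: "k = Suc (Suc (Suc l))" by blast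
        hence "l < length qs" using h(1) k by simp
        hence "fits_run (2+1+l) (qs!l)" using h(4) by blast
        thus ?thesis using kl by (simp add: numeral_eq_Suc)
      qed
    qed
  qed
  thus ?thesis unfolding occurs_in_zigzag_runs_def using h(1,2)
    by (intro exI[of _ ?Q]) simp
qed

theorem proposition5p2:
  fixes n :: nat and p :: "nat list"
  assumes "n \<ge> 1"
    and "length p = n"
    and "positive_word p"
    and "\<not> has_immediate_repetition p"
  shows "occurs_in_zigzag_runs n p \<or> occurs_in_zigzag_runs n (shift_word p)"
proof -
  have ne: "p \<noteq> []" using assms(1,2) by auto
  let ?q = "shift_word p"
  have sum: "cost p + cost ?q = 2 * (n - 1)" using cost_shift[OF assms(4)] assms(2)
    by (simp add: shift_word_def)
  have lq: "length ?q = n" "?q \<noteq> []" using assms(2) ne by (auto simp: shift_word_def)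
  have hq: "hd ?q = hd p + 1" using ne by (cases p) (auto simp: shift_word_def)
  show ?thesis
  proof (cases "odd (hd p)")
    case True
    show ?thesis
    proof (cases "cost p < n")
      case True
      thus ?thesis using main_odd[OF assms(3,4) ne \<open>odd (hd p)\<close>] assms(2) by simp
    next
      case False
      hence "cost ?q + 1 < n" using sum assms(1) by linarith
      thus ?thesis using main_even[OF shift_props(1) shift_props(2)[OF assms(4)] lq(2)] hq True lq(1) by simp
    qed
  next
    case False
    show ?thesis
    proof (cases "cost p + 1 < n")
      case True
      thus ?thesis using main_even[OF assms(3,4) ne] False assms(2) by simp
    next
      case F2: False
      hence "cost ?q < n" using sum assms(1) by linarith
      thus ?thesis using main_odd[OF shift_props(1) shift_props(2)[OF assms(4)] lq(2)] hq False lq(1) by simp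
    qed
  qed
qed

end
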